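(* Let $\theta\in\mathbb{R}^{m\times n}$ and $\overline\theta = \frac{1}{mn}\sum_{i=1}^m\sum_{j=1}^n\theta[i,j]$. Then $$\sum_{i=1}^m\sum_{j=1}^n(\theta[i,j]-\overline\theta)^2 \leq \Big(5 + \frac{4mn}{\min(n^2,m^2)}\Big)\mathrm{TV}(\theta)^2.$$ In particular, when $m=n$, $\sum_{i=1}^n\sum_{j=1}^n(\theta[i,j]-\overline\theta)^2 \le 9\,\mathrm{TV}(\theta)^2$.
   Context: For $\theta\in\mathbb{R}^{m\times n}$, $\mathrm{TV}(\theta) = \sum_{i\in[m]}\sum_{j\in[n-1]}|\theta[i,j+1]-\theta[i,j]| + \sum_{i\in[m-1]}\sum_{j\in[n]}|\theta[i+1,j]-\theta[i,j]|$ (unnormalized total variation over the edges of the $m\times n$ grid graph). *)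

theory Defs
  imports Complex_Main
begin

text \<open>Grid matrices are represented as functions nat => nat => real, with
  row indices in {..<m} and column indices in {..<n} (0-based).\<close>

definition TV :: "nat \<Rightarrow> nat \<Rightarrow> (nat \<Rightarrow> nat \<Rightarrow> real) \<Rightarrow> real" where
  "TV m n \<theta> =
     (\<Sum>i<m. \<Sum>j<n - 1. \<bar>\<theta> i (j + 1) - \<theta> i j\<bar>)
   + (\<Sum>i<m - 1. \<Sum>j<n. \<bar>\<theta> (i + 1) j - \<theta> i j\<bar>)"

definition grid_mean :: "nat \<Rightarrow> nat \<Rightarrow> (nat \<Rightarrow> nat \<Rightarrow> real) \<Rightarrow> real" where
  "grid_mean m n \<theta> = (\<Sum>i<m. \<Sum>j<n. \<theta> i j) / (real m * real n)"

end

theory Submission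
  imports Defs
begin

lemma tele_le:
  fixes f :: "nat \<Rightarrow> real"
  shows "j \<le> l \<Longrightarrow> \<bar>f l - f j\<bar> \<le> (\<Sum>t\<in>{j..<l}. \<bar>f (t+1) - f t\<bar>)"
proof (induction l)
  case 0 then show ?case by simp
next
  case (Suc l)
  show ?case
  proof (cases "j = Suc l")
    case True then show ?thesis by simp
  next
    case False
    then have "j \<le> l" using Suc by simp
    then have "\<bar>f l - f j\<bar> \<le> (\<Sum>t\<in>{j..<l}. \<bar>f (t+1) - f t\<bar>)" using Suc by simp
    moreover have "(\<Sum>t\<in>{j..<Suc l}. \<bar>f (t+1) - f t\<bar>) = (\<Sum>t\<in>{j..<l}. \<bar>f (t+1) - f t\<bar>) + \<bar>f (Suc l) - f l\<bar>"
      using \<open>j \<le> l\<close> by simp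
    ultimately show ?thesis by linarith
  qed
qed

lemma path_le:
  fixes f :: "nat \<Rightarrow> real"
  assumes "j < n" "l < n"
  shows "\<bar>f j - f l\<bar> \<le> (\<Sum>t<n-1. \<bar>f (t+1) - f t\<bar>)"
proof -
  have gen: "\<bar>f b - f a\<bar> \<le> (\<Sum>t<n-1. \<bar>f (t+1) - f t\<bar>)" if "a \<le> b" "b < n" for a b
  proof -
    have "\<bar>f b - f a\<bar> \<le> (\<Sum>t\<in>{a..<b}. \<bar>f (t+1) - f t\<bar>)" using tele_le that by blast
    also have "\<dots> \<le> (\<Sum>t<n-1. \<bar>f (t+1) - f t\<bar>)"
      by (rule sum_mono2) (use that in auto)
    finally show ?thesis .
  qed
  show ?thesis
  proof (cases "j \<le> l")
    case True then show ?thesis using gen[of j l] assms by (simp add: abs_minus_commute)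
  next
    case False then show ?thesis using gen[of l j] assms by simp
  qed
qed

lemma var_id:
  fixes g :: "'a \<Rightarrow> real"
  assumes "finite A" "A \<noteq> {}"
  shows "2 * real (card A) * (\<Sum>p\<in>A. (g p - sum g A / real (card A))^2)
         = (\<Sum>p\<in>A. \<Sum>q\<in>A. (g p - g q)^2)"
proof -
  define N where "N = real (card A)"
  define S where "S = sum g A"
  define Q where "Q = (\<Sum>p\<in>A. (g p)^2)"
  have N: "N > 0" using assms by (simp add: N_def card_gt_0_iff)
  have "(\<Sum>p\<in>A. (g p - S / N)^2) = (\<Sum>p\<in>A. (g p)^2 - 2 * (S/N) * g p + (S/N)^2)"
    by (intro sum.cong refl) (simp add: power2_diff algebra_simps)
  also have "\<dots> = Q - 2 * (S/N) * S + N * (S/N)^2"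
    by (simp add: sum.distrib sum_subtractf sum_distrib_left[symmetric] sum_divide_distrib[symmetric] Q_def S_def N_def)
  finally have L: "(\<Sum>p\<in>A. (g p - S / N)^2) = Q - 2 * (S/N) * S + N * (S/N)^2" .
  have "(\<Sum>p\<in>A. \<Sum>q\<in>A. (g p - g q)^2) = (\<Sum>p\<in>A. \<Sum>q\<in>A. (g p)^2 - 2 * g p * g q + (g q)^2)"
    by (intro sum.cong refl) (simp add: power2_diff algebra_simps)
  also have "\<dots> = (\<Sum>p\<in>A. N * (g p)^2 - 2 * g p * S + Q)"
    by (simp add: sum.distrib sum_subtractf sum_distrib_left[symmetric] sum_divide_distrib[symmetric] Q_def S_def N_def mult.assoc)
  also have "\<dots> = N * Q - 2 * S * S + N * Q"
    by (simp add: sum.distrib sum_subtractf sum_distrib_left[symmetric] sum_distrib_right[symmetric] Q_def S_def N_def)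
  finally have R: "(\<Sum>p\<in>A. \<Sum>q\<in>A. (g p - g q)^2) = N * Q - 2 * S * S + N * Q" .
  show ?thesis unfolding L R N_def[symmetric] S_def[symmetric]
    using N by (simp add: field_simps power2_eq_square)
qed


lemma main_bound:
  fixes m n :: nat and \<theta> :: "nat \<Rightarrow> nat \<Rightarrow> real"
  assumes "m \<ge> 1" and "n \<ge> 1"
  shows "(\<Sum>i<m. \<Sum>j<n. (\<theta> i j - grid_mean m n \<theta>)^2)
           \<le> (5 + 4 * real m * real n / min ((real n)^2) ((real m)^2)) * (TV m n \<theta>)^2"
proof -
  define H where "H i = (\<Sum>j<n-1. \<bar>\<theta> i (j+1) - \<theta> i j\<bar>)" for i
  define V where "V l = (\<Sum>i<m-1. \<bar>\<theta> (i+1) l - \<theta> i l\<bar>)" for l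
  define SH where "SH = sum H {..<m}"
  define SV where "SV = sum V {..<n}"
  have H0: "H i \<ge> 0" for i unfolding H_def by (simp add: sum_nonneg)
  have V0: "V i \<ge> 0" for i unfolding V_def by (simp add: sum_nonneg)
  have SH0: "SH \<ge> 0" unfolding SH_def using H0 by (simp add: sum_nonneg)
  have SV0: "SV \<ge> 0" unfolding SV_def using V0 by (simp add: sum_nonneg)
  have TV: "TV m n \<theta> = SH + SV"
    unfolding TV_def SH_def SV_def H_def V_def using sum.swap[where A="{..<m-1}" and B="{..<n}" and g="\<lambda>i j. \<bar>\<theta> (i + 1) j - \<theta> i j\<bar>"] by simp
  have rowb: "\<bar>\<theta> i j - \<theta> i l\<bar> \<le> H i" if "j < n" "l < n" for i j l
    unfolding H_def using path_le[OF that, of "\<theta> i"] by simp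
  have colb: "\<bar>\<theta> i j - \<theta> k j\<bar> \<le> V j" if "i < m" "k < m" for i j k
    unfolding V_def using path_le[OF that, of "\<lambda>i. \<theta> i j"] by simp
  have pt: "(\<theta> i j - \<theta> k l)^2 \<le> (H i + V l) * (V j + H k)"
    if "i < m" "k < m" "j < n" "l < n" for i j k l
  proof -
    have a: "\<bar>\<theta> i j - \<theta> k l\<bar> \<le> H i + V l"
      using rowb[of j l i] colb[of i k l] that by linarith
    have b: "\<bar>\<theta> i j - \<theta> k l\<bar> \<le> V j + H k"
      using rowb[of j l k] colb[of i k j] that by linarith
    have "(\<theta> i j - \<theta> k l)^2 = \<bar>\<theta> i j - \<theta> k l\<bar> * \<bar>\<theta> i j - \<theta> k l\<bar>"
      by (simp add: power2_eq_square)
    also have "\<dots> \<le> (H i + V l) * (V j + H k)"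
      by (rule mult_mono[OF a b]) (use H0 V0 in auto)
    finally show ?thesis .
  qed
  define A where "A = {..<m} \<times> {..<n}"
  define g where "g p = \<theta> (fst p) (snd p)" for p
  have fin: "finite A" and ne: "A \<noteq> {}" unfolding A_def using assms by (auto simp: lessThan_empty_iff)
  have cA: "real (card A) = real m * real n" unfolding A_def by (simp add: card_cartesian_product)
  have nest: "(\<Sum>i<m. \<Sum>j<n. F i j) = (\<Sum>p\<in>A. F (fst p) (snd p))" for F :: "nat \<Rightarrow> nat \<Rightarrow> real"
    unfolding A_def by (simp add: sum.cartesian_product case_prod_beta)
  have gm: "grid_mean m n \<theta> = sum g A / real (card A)"
    unfolding grid_mean_def cA g_def using nest[of \<theta>] by simp
  have four: "(\<Sum>p\<in>A. \<Sum>q\<in>A. (g p - g q)^2)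
      = (\<Sum>i<m. \<Sum>j<n. \<Sum>k<m. \<Sum>l<n. (\<theta> i j - \<theta> k l)^2)"
    unfolding g_def nest by simp
  have "(\<Sum>i<m. \<Sum>j<n. \<Sum>k<m. \<Sum>l<n. (\<theta> i j - \<theta> k l)^2)
      \<le> (\<Sum>i<m. \<Sum>j<n. \<Sum>k<m. \<Sum>l<n. (H i + V l) * (V j + H k))"
    by (intro sum_mono pt) auto
  also have "\<dots> = (real n * SH + real m * SV)^2"
  proof -
    have inner: "(\<Sum>l<n. (H i + V l) * c) = (real n * H i + SV) * c" for i c
      by (simp add: SV_def sum_distrib_right[symmetric] sum.distrib)
    have "(\<Sum>k<m. \<Sum>l<n. (H i + V l) * (V j + H k)) = (real n * H i + SV) * (real m * V j + SH)" for i j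
      unfolding inner by (simp add: SH_def sum.distrib sum_distrib_left[symmetric])
    then have "(\<Sum>i<m. \<Sum>j<n. \<Sum>k<m. \<Sum>l<n. (H i + V l) * (V j + H k))
        = (\<Sum>i<m. \<Sum>j<n. (real n * H i + SV) * (real m * V j + SH))" by simp
    also have "\<dots> = (\<Sum>i<m. (real n * H i + SV) * (real m * SV + real n * SH))"
    proof (rule sum.cong[OF refl])
      fix i
      have "(\<Sum>j<n. (real n * H i + SV) * (real m * V j + SH))
          = (real n * H i + SV) * (\<Sum>j<n. real m * V j + SH)" by (simp add: sum_distrib_left)
      also have "(\<Sum>j<n. real m * V j + SH) = real m * SV + real n * SH"
        by (simp add: sum.distrib SV_def sum_distrib_left)
      finally show "(\<Sum>j<n. (real n * H i + SV) * (real m * V j + SH))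
          = (real n * H i + SV) * (real m * SV + real n * SH)" .
    qed
    also have "\<dots> = (\<Sum>i<m. real n * H i + SV) * (real m * SV + real n * SH)"
      by (simp add: sum_distrib_right)
    also have "(\<Sum>i<m. real n * H i + SV) = real n * SH + real m * SV"
      by (simp add: sum.distrib SH_def sum_distrib_left)
    finally show ?thesis by (simp add: power2_eq_square algebra_simps)
  qed
  finally have key: "2 * (real m * real n) * (\<Sum>i<m. \<Sum>j<n. (\<theta> i j - grid_mean m n \<theta>)^2)
      \<le> (real n * SH + real m * SV)^2"
    using var_id[OF fin ne, of g] unfolding four[symmetric] cA[symmetric] gm
    by (simp add: nest g_def)
  define X where "X = (\<Sum>i<m. \<Sum>j<n. (\<theta> i j - grid_mean m n \<theta>)^2)"
  define T where "T = SH + SV"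
  have T0: "T \<ge> 0" using SH0 SV0 by (simp add: T_def)
  have mp: "real m > 0" "real n > 0" using assms by auto
  have key2: "2 * (real m * real n) * X \<le> (max (real m) (real n))^2 * T^2"
  proof -
    have "real n * SH + real m * SV \<le> max (real m) (real n) * T"
      unfolding T_def using SH0 SV0
      by (simp add: distrib_left mult_right_mono add_mono)
    moreover have "0 \<le> real n * SH + real m * SV" using SH0 SV0 by simp
    ultimately have "(real n * SH + real m * SV)^2 \<le> (max (real m) (real n) * T)^2"
      by (simp add: power_mono)
    then show ?thesis using key unfolding X_def by (simp add: power_mult_distrib)
  qed
  have X0: "X \<ge> 0" unfolding X_def by (simp add: sum_nonneg)
  have "X \<le> (5 + 4 * real m * real n / min ((real n)^2) ((real m)^2)) * T^2"
  proof (cases "m \<le> n")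
    case True
    then have mx: "max (real m) (real n) = real n" and mn: "min ((real n)^2) ((real m)^2) = (real m)^2"
      by (auto simp: power_mono)
    have "4 * real m * real n / (real m)^2 = 4 * real n / real m" using mp by (simp add: power2_eq_square)
    moreover have "2 * real m * X \<le> real n * T^2"
      using key2 mp unfolding mx by (simp add: power2_eq_square algebra_simps)
    then have "X \<le> (real n / (2 * real m)) * T^2" using mp by (simp add: field_simps)
    moreover have "real n / (2 * real m) \<le> 5 + 4 * real n / real m" using mp by (simp add: field_simps)
    ultimately show ?thesis unfolding mn
      by (smt (verit) mult_right_mono zero_le_power2)
  next
    case False
    then have mx: "max (real m) (real n) = real m" and mn: "min ((real n)^2) ((real m)^2) = (real n)^2"
      by (auto simp: power_mono)
    have "4 * real m * real n / (real n)^2 = 4 * real m / real n" using mp by (simp add: power2_eq_square)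
    moreover have "2 * real n * X \<le> real m * T^2"
      using key2 mp unfolding mx by (simp add: power2_eq_square algebra_simps)
    then have "X \<le> (real m / (2 * real n)) * T^2" using mp by (simp add: field_simps)
    moreover have "real m / (2 * real n) \<le> 5 + 4 * real m / real n" using mp by (simp add: field_simps)
    ultimately show ?thesis unfolding mn
      by (smt (verit) mult_right_mono zero_le_power2)
  qed
  then show ?thesis unfolding X_def T_def TV .
qed

theorem proposition4p3:
  fixes m n :: nat and \<theta> :: "nat \<Rightarrow> nat \<Rightarrow> real"
  assumes "m \<ge> 1" and "n \<ge> 1"
  shows "(\<Sum>i<m. \<Sum>j<n. (\<theta> i j - grid_mean m n \<theta>)^2)
           \<le> (5 + 4 * real m * real n / min ((real n)^2) ((real m)^2)) * (TV m n \<theta>)^2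
         \<and> (m = n \<longrightarrow> (\<Sum>i<n. \<Sum>j<n. (\<theta> i j - grid_mean n n \<theta>)^2) \<le> 9 * (TV n n \<theta>)^2)"
proof
  show "(\<Sum>i<m. \<Sum>j<n. (\<theta> i j - grid_mean m n \<theta>)^2)
           \<le> (5 + 4 * real m * real n / min ((real n)^2) ((real m)^2)) * (TV m n \<theta>)^2"
    using main_bound[OF assms] .
  show "m = n \<longrightarrow> (\<Sum>i<n. \<Sum>j<n. (\<theta> i j - grid_mean n n \<theta>)^2) \<le> 9 * (TV n n \<theta>)^2"
  proof
    assume "m = n"
    have "4 * real n * real n / min ((real n)^2) ((real n)^2) = 4" using assms(2)
      by (simp add: power2_eq_square)
    then show "(\<Sum>i<n. \<Sum>j<n. (\<theta> i j - grid_mean n n \<theta>)^2) \<le> 9 * (TV n n \<theta>)^2"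
      using main_bound[OF assms(2) assms(2), of \<theta>] by simp
  qed
qed

end
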